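(* Let $(M,g)$ be a $d$-dimensional Lorentzian manifold with $d>5$, $p\in M$, and $\{\ell,n,m^3,\dots,m^d\}$ a null frame at $p$. Suppose the Weyl tensor $C$ at $p$ is invariant under the subgroup of the Lorentz group that fixes $\ell$, $n$ and $m^3$ and acts as $SO(d-3)$, in its standard representation, on $\mathrm{span}\{m^4,\dots,m^d\}$. Let $\kappa=\mathrm{diag}(d-3,-1,-1,\dots,-1)$ be the $(d-2)\times(d-2)$ diagonal matrix (indexed by $3,\dots,d$). Then in this frame there are real numbers $\check\lambda_1,\hat\lambda_1,\check v,\hat v,s,\bar R$ such that $\check H=\check\lambda_1\kappa$, $\check T=0$, $\check v^i=\delta^i_3\check v$; $A_{ij}=0$, $\bar S=s\kappa$, $\bar C_{ijkl}=0$ (with $\bar R$ arbitrary); $\hat H=\hat\lambda_1\kappa$, $\hat T=0$, $\hat v^i=\delta^i_3\hat v$.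
   Context: Null frame convention: $g=2\,\ell\, n+\delta_{ij}m^im^j$, i.e. $g(\ell,n)=1$, $g(m^i,m^j)=\delta_{ij}$, all other products zero. Frame indices: $0$ refers to $\ell$, $1$ to $n$, $i,j,k,l\in\{3,\dots,d\}$ to the $m^i$; let $N=d-2$. $C_{abcd}$ are the frame components of the Weyl tensor. Definitions: $\hat H_{ij}=C_{0i0j}$, $\check H_{ij}=C_{1i1j}$ (symmetric, traceless matrices); $A_{ij}=C_{01ij}$; $\bar R_{ij}=\sum_k C_{kikj}$, $\bar R=\sum_i\bar R_{ii}$, $\bar S_{ij}=\bar R_{ij}-\frac1N\bar R\delta_{ij}$; $\bar C_{ijkl}$ is the Weyl (totally trace-free) part of the algebraic curvature tensor $C_{ijkl}$ on $\mathbb R^N$. The tensor $C_{1ijk}$ (antisymmetric in $j,k$) decomposes uniquely as $C_{1ijk}=\delta_{ij}\check v_k-\delta_{ik}\check v_j+\check T_{ijk}$ with $\sum_i\check T_{iji}=0$ and $\check T_{(ijk)}=0$ (so $\check v_k=\frac{1}{N-1}\sum_i C_{1iik}$); likewise $C_{0ijk}=\delta_{ij}\hat v_k-\delta_{ik}\hat v_j+\hat T_{ijk}$ with $\hat T$ of the same type. *)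

theory Defs
  imports Complex_Main "HOL-Combinatorics.Permutations"
begin

type_synonym tensor4 = "nat \<Rightarrow> nat \<Rightarrow> nat \<Rightarrow> nat \<Rightarrow> real"

text \<open>Frame indices: 0 = l, 1 = n, 3..d = m^3..m^d (index 2 unused).\<close>
definition fidx :: "nat \<Rightarrow> nat set" where
  "fidx d = {0, 1} \<union> {3..d}"

definition sidx :: "nat \<Rightarrow> nat set" where
  "sidx d = {3..d}"

text \<open>Frame components of the (inverse) metric g = 2 l n + sum m^i m^i.\<close>
definition gfr :: "nat \<Rightarrow> nat \<Rightarrow> real" where
  "gfr a b = (if (a = 0 \<and> b = 1) \<or> (a = 1 \<and> b = 0) then 1
              else if a = b \<and> 3 \<le> a then 1 else 0)"

definition kdelta :: "nat \<Rightarrow> nat \<Rightarrow> real" where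
  "kdelta i j = (if i = j then 1 else 0)"

definition is_weyl :: "nat \<Rightarrow> tensor4 \<Rightarrow> bool" where
  "is_weyl d C \<longleftrightarrow>
     (\<forall>a\<in>fidx d. \<forall>b\<in>fidx d. \<forall>c\<in>fidx d. \<forall>e\<in>fidx d.
        C a b c e = - C b a c e \<and> C a b c e = - C a b e c \<and>
        C a b c e = C c e a b \<and> C a b c e + C a c e b + C a e b c = 0) \<and>
     (\<forall>b\<in>fidx d. \<forall>e\<in>fidx d.
        (\<Sum>a\<in>fidx d. \<Sum>c\<in>fidx d. gfr a c * C a b c e) = 0)"

definition det_on :: "nat set \<Rightarrow> (nat \<Rightarrow> nat \<Rightarrow> real) \<Rightarrow> real" where
  "det_on S Q = (\<Sum>p | p permutes S. of_int (sign p) * (\<Prod>i\<in>S. Q i (p i)))"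

definition rotation_on :: "nat set \<Rightarrow> (nat \<Rightarrow> nat \<Rightarrow> real) \<Rightarrow> bool" where
  "rotation_on S Q \<longleftrightarrow>
     (\<forall>i\<in>S. \<forall>j\<in>S. (\<Sum>k\<in>S. Q i k * Q j k) = kdelta i j) \<and> det_on S Q = 1"

definition lift :: "nat \<Rightarrow> (nat \<Rightarrow> nat \<Rightarrow> real) \<Rightarrow> nat \<Rightarrow> nat \<Rightarrow> real" where
  "lift d Q a b = (if a \<in> {4..d} \<and> b \<in> {4..d} then Q a b else kdelta a b)"

definition so_invariant :: "nat \<Rightarrow> tensor4 \<Rightarrow> bool" where
  "so_invariant d C \<longleftrightarrow>
     (\<forall>Q. rotation_on {4..d} Q \<longrightarrow>
       (\<forall>a\<in>fidx d. \<forall>b\<in>fidx d. \<forall>c\<in>fidx d. \<forall>e\<in>fidx d.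
          C a b c e = (\<Sum>f\<in>fidx d. \<Sum>g\<in>fidx d. \<Sum>h\<in>fidx d. \<Sum>k\<in>fidx d.
             lift d Q a f * lift d Q b g * lift d Q c h * lift d Q e k * C f g h k)))"

definition Nd :: "nat \<Rightarrow> real" where "Nd d = real d - 2"

definition kappa :: "nat \<Rightarrow> nat \<Rightarrow> nat \<Rightarrow> real" where
  "kappa d i j = (if i = j then (if i = 3 then real d - 3 else -1) else 0)"

definition Hhat :: "tensor4 \<Rightarrow> nat \<Rightarrow> nat \<Rightarrow> real" where "Hhat C i j = C 0 i 0 j"
definition Hcheck :: "tensor4 \<Rightarrow> nat \<Rightarrow> nat \<Rightarrow> real" where "Hcheck C i j = C 1 i 1 j"
definition Amat :: "tensor4 \<Rightarrow> nat \<Rightarrow> nat \<Rightarrow> real" where "Amat C i j = C 0 1 i j"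

definition vcheck :: "nat \<Rightarrow> tensor4 \<Rightarrow> nat \<Rightarrow> real" where
  "vcheck d C k = (1 / (Nd d - 1)) * (\<Sum>i\<in>sidx d. C 1 i i k)"
definition Tcheck :: "nat \<Rightarrow> tensor4 \<Rightarrow> nat \<Rightarrow> nat \<Rightarrow> nat \<Rightarrow> real" where
  "Tcheck d C i j k = C 1 i j k - kdelta i j * vcheck d C k + kdelta i k * vcheck d C j"
definition vhat :: "nat \<Rightarrow> tensor4 \<Rightarrow> nat \<Rightarrow> real" where
  "vhat d C k = (1 / (Nd d - 1)) * (\<Sum>i\<in>sidx d. C 0 i i k)"
definition That :: "nat \<Rightarrow> tensor4 \<Rightarrow> nat \<Rightarrow> nat \<Rightarrow> nat \<Rightarrow> real" where
  "That d C i j k = C 0 i j k - kdelta i j * vhat d C k + kdelta i k * vhat d C j"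

definition Rbar :: "nat \<Rightarrow> tensor4 \<Rightarrow> nat \<Rightarrow> nat \<Rightarrow> real" where
  "Rbar d C i j = (\<Sum>k\<in>sidx d. C k i k j)"
definition Rbar_sc :: "nat \<Rightarrow> tensor4 \<Rightarrow> real" where
  "Rbar_sc d C = (\<Sum>i\<in>sidx d. Rbar d C i i)"
definition Sbar :: "nat \<Rightarrow> tensor4 \<Rightarrow> nat \<Rightarrow> nat \<Rightarrow> real" where
  "Sbar d C i j = Rbar d C i j - Rbar_sc d C / Nd d * kdelta i j"

text \<open>Weyl (totally trace-free) part of C_{ijkl} on R^N.\<close>
definition Cbar :: "nat \<Rightarrow> tensor4 \<Rightarrow> nat \<Rightarrow> nat \<Rightarrow> nat \<Rightarrow> nat \<Rightarrow> real" where
  "Cbar d C i j k l = C i j k l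
     - (1 / (Nd d - 2)) * (kdelta i k * Rbar d C j l - kdelta i l * Rbar d C j k
                          - kdelta j k * Rbar d C i l + kdelta j l * Rbar d C i k)
     + Rbar_sc d C / ((Nd d - 1) * (Nd d - 2)) * (kdelta i k * kdelta j l - kdelta i l * kdelta j k)"

end

theory Submission
  imports Defs
begin


definition spQ :: "(nat \<Rightarrow> nat) \<Rightarrow> (nat \<Rightarrow> real) \<Rightarrow> nat \<Rightarrow> nat \<Rightarrow> real" where
  "spQ \<sigma> \<epsilon> a b = (if b = \<sigma> a then \<epsilon> a else 0)"

lemma det_spQ:
  assumes fin: "finite B" and p: "\<sigma> permutes B"
  shows "det_on B (spQ \<sigma> \<epsilon>) = of_int (sign \<sigma>) * prod \<epsilon> B"
proof -
  have fP: "finite {p. p permutes B}" using finite_permutations[OF fin] .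
  have s: "\<sigma> \<in> {p. p permutes B}" using p by simp
  have z: "(\<Sum>p\<in>{p. p permutes B} - {\<sigma>}. of_int (sign p) * (\<Prod>i\<in>B. spQ \<sigma> \<epsilon> i (p i))) = 0"
  proof (rule sum.neutral, intro ballI)
    fix q assume q: "q \<in> {p. p permutes B} - {\<sigma>}"
    hence qp: "q permutes B" and qn: "q \<noteq> \<sigma>" by auto
    have "\<exists>i\<in>B. q i \<noteq> \<sigma> i"
    proof (rule ccontr)
      assume "\<not> ?thesis"
      hence "\<forall>i. q i = \<sigma> i" using qp p by (metis permutes_not_in)
      thus False using qn by auto
    qed
    then obtain i where "i \<in> B" "q i \<noteq> \<sigma> i" by auto
    hence "(\<Prod>i\<in>B. spQ \<sigma> \<epsilon> i (q i)) = 0"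
      using fin by (intro prod_zero) (auto simp: spQ_def)
    thus "of_int (sign q) * (\<Prod>i\<in>B. spQ \<sigma> \<epsilon> i (q i)) = 0" by simp
  qed
  have "det_on B (spQ \<sigma> \<epsilon>) = of_int (sign \<sigma>) * (\<Prod>i\<in>B. spQ \<sigma> \<epsilon> i (\<sigma> i))
        + (\<Sum>p\<in>{p. p permutes B} - {\<sigma>}. of_int (sign p) * (\<Prod>i\<in>B. spQ \<sigma> \<epsilon> i (p i)))"
    unfolding det_on_def using sum.remove[OF fP s] by simp
  also have "\<dots> = of_int (sign \<sigma>) * prod \<epsilon> B" using z by (simp add: spQ_def)
  finally show ?thesis .
qed

lemma rot_spQ:
  assumes fin: "finite B" and p: "\<sigma> permutes B" and e: "\<forall>z. \<epsilon> z = 1 \<or> \<epsilon> z = -1"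
    and det: "of_int (sign \<sigma>) * prod \<epsilon> B = 1"
  shows "rotation_on B (spQ \<sigma> \<epsilon>)"
  unfolding rotation_on_def
proof (intro conjI ballI)
  show "det_on B (spQ \<sigma> \<epsilon>) = 1" using det_spQ[OF fin p] det by simp
next
  fix i j assume i: "i \<in> B" and j: "j \<in> B"
  have si: "\<sigma> i \<in> B" using p i by (simp add: permutes_in_image)
  have inj: "\<sigma> i = \<sigma> j \<longleftrightarrow> i = j" using p by (metis permutes_inj injD)
  have "(\<Sum>k\<in>B. spQ \<sigma> \<epsilon> i k * spQ \<sigma> \<epsilon> j k) = (\<Sum>k\<in>B. if k = \<sigma> i then (if \<sigma> i = \<sigma> j then \<epsilon> i * \<epsilon> j else 0) else 0)"
    by (rule sum.cong) (auto simp: spQ_def)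
  also have "\<dots> = (if \<sigma> i = \<sigma> j then \<epsilon> i * \<epsilon> j else 0)" using fin si by simp
  also have "\<dots> = kdelta i j" using inj e[rule_format, of i] by (auto simp: kdelta_def)
  finally show "(\<Sum>k\<in>B. spQ \<sigma> \<epsilon> i k * spQ \<sigma> \<epsilon> j k) = kdelta i j" .
qed

lemma lift_spQ:
  assumes p: "\<sigma> permutes {4..d}" and e1: "\<forall>z. z \<notin> {4..d} \<longrightarrow> \<epsilon> z = 1"
  shows "lift d (spQ \<sigma> \<epsilon>) a f = (if f = \<sigma> a then \<epsilon> a else 0)"
proof (cases "a \<in> {4..d}")
  case True
  hence "\<sigma> a \<in> {4..d}" using p by (metis permutes_in_image)
  thus ?thesis using True by (auto simp: lift_def spQ_def kdelta_def)
next
  case False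
  hence "\<sigma> a = a" using p by (simp add: permutes_not_in)
  thus ?thesis using False e1 by (auto simp: lift_def spQ_def kdelta_def)
qed

lemma sum_if_eq: fixes c :: real shows "finite A \<Longrightarrow> t \<in> A \<Longrightarrow> (\<Sum>f\<in>A. (if f = t then c else 0) * G f) = c * G t"
proof -
  assume "finite A" "t \<in> A"
  have "(\<Sum>f\<in>A. (if f = t then c else 0) * G f) = (\<Sum>f\<in>A. if f = t then c * G t else 0)"
    by (rule sum.cong) auto
  thus ?thesis using \<open>finite A\<close> \<open>t \<in> A\<close> by simp
qed

lemma sp_inv:
  assumes inv: "so_invariant d C"
    and p: "\<sigma> permutes {4..d}" and e: "\<forall>z. \<epsilon> z = 1 \<or> \<epsilon> z = -1"
    and e1: "\<forall>z. z \<notin> {4..d} \<longrightarrow> \<epsilon> z = 1"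
    and det: "of_int (sign \<sigma>) * prod \<epsilon> {4..d} = 1"
    and abce: "a \<in> fidx d" "b \<in> fidx d" "c \<in> fidx d" "e \<in> fidx d"
  shows "C a b c e = \<epsilon> a * \<epsilon> b * \<epsilon> c * \<epsilon> e * C (\<sigma> a) (\<sigma> b) (\<sigma> c) (\<sigma> e)"
proof -
  have rot: "rotation_on {4..d} (spQ \<sigma> \<epsilon>)" by (rule rot_spQ[OF _ p e det]) simp
  have sf: "\<And>x. x \<in> fidx d \<Longrightarrow> \<sigma> x \<in> fidx d"
  proof -
    fix x assume x: "x \<in> fidx d"
    show "\<sigma> x \<in> fidx d"
    proof (cases "x \<in> {4..d}")
      case True hence "\<sigma> x \<in> {4..d}" using p by (metis permutes_in_image)
      thus ?thesis by (auto simp: fidx_def)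
    next
      case False thus ?thesis using p x by (simp add: permutes_not_in)
    qed
  qed
  have fin: "finite (fidx d)" by (simp add: fidx_def)
  have "C a b c e = (\<Sum>f\<in>fidx d. \<Sum>g\<in>fidx d. \<Sum>h\<in>fidx d. \<Sum>k\<in>fidx d.
          lift d (spQ \<sigma> \<epsilon>) a f * lift d (spQ \<sigma> \<epsilon>) b g * lift d (spQ \<sigma> \<epsilon>) c h * lift d (spQ \<sigma> \<epsilon>) e k * C f g h k)"
    using inv rot abce unfolding so_invariant_def by blast
  also have "\<dots> = (\<Sum>f\<in>fidx d. \<Sum>g\<in>fidx d. \<Sum>h\<in>fidx d. \<Sum>k\<in>fidx d.
             (if f = \<sigma> a then \<epsilon> a else 0) * (if g = \<sigma> b then \<epsilon> b else 0) *
             (if h = \<sigma> c then \<epsilon> c else 0) * (if k = \<sigma> e then \<epsilon> e else 0) * C f g h k)"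
    by (simp only: lift_spQ[OF p e1])
  also have "\<dots> = (\<Sum>f\<in>fidx d. (if f = \<sigma> a then \<epsilon> a else 0) * (\<Sum>g\<in>fidx d. (if g = \<sigma> b then \<epsilon> b else 0) *
              (\<Sum>h\<in>fidx d. (if h = \<sigma> c then \<epsilon> c else 0) * (\<Sum>k\<in>fidx d. (if k = \<sigma> e then \<epsilon> e else 0) * C f g h k))))"
    by (simp add: sum_distrib_left mult.assoc)
  also have "\<dots> = \<epsilon> a * (\<epsilon> b * (\<epsilon> c * (\<epsilon> e * C (\<sigma> a) (\<sigma> b) (\<sigma> c) (\<sigma> e))))"
    by (simp add: sum_if_eq[OF fin] sf abce)
  finally show ?thesis by (simp add: mult.assoc)
qed




locale W6 =
  fixes d :: nat and C :: tensor4
  assumes d5: "d > 5" and W: "is_weyl d C" and I: "so_invariant d C"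
begin

lemma inF: "x \<in> {3..d} \<Longrightarrow> x \<in> fidx d" "(0::nat) \<in> fidx d" "(1::nat) \<in> fidx d"
  by (auto simp: fidx_def)

lemma aS: "a \<in> fidx d \<Longrightarrow> b \<in> fidx d \<Longrightarrow> c \<in> fidx d \<Longrightarrow> e \<in> fidx d \<Longrightarrow> C a b c e = - C b a c e"
  using W unfolding is_weyl_def by blast
lemma bS: "a \<in> fidx d \<Longrightarrow> b \<in> fidx d \<Longrightarrow> c \<in> fidx d \<Longrightarrow> e \<in> fidx d \<Longrightarrow> C a b c e = - C a b e c"
  using W unfolding is_weyl_def by blast
lemma pS: "a \<in> fidx d \<Longrightarrow> b \<in> fidx d \<Longrightarrow> c \<in> fidx d \<Longrightarrow> e \<in> fidx d \<Longrightarrow> C a b c e = C c e a b"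
  using W unfolding is_weyl_def by blast
lemma bian: "a \<in> fidx d \<Longrightarrow> b \<in> fidx d \<Longrightarrow> c \<in> fidx d \<Longrightarrow> e \<in> fidx d \<Longrightarrow> C a b c e + C a c e b + C a e b c = 0"
  using W unfolding is_weyl_def by blast

lemma zero1: "a \<in> fidx d \<Longrightarrow> c \<in> fidx d \<Longrightarrow> e \<in> fidx d \<Longrightarrow> C a a c e = 0"
  using aS[of a a c e] by simp
lemma zero2: "a \<in> fidx d \<Longrightarrow> b \<in> fidx d \<Longrightarrow> c \<in> fidx d \<Longrightarrow> C a b c c = 0"
  using bS[of a b c c] by simp

lemma flip:
  assumes x: "x \<in> {4..d}" and y: "y \<in> {4..d}" and xy: "x \<noteq> y"
    and abce: "a \<in> fidx d" "b \<in> fidx d" "c \<in> fidx d" "e \<in> fidx d"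
    and sg: "(if a = x \<or> a = y then -1 else 1) * (if b = x \<or> b = y then -1 else 1) *
             (if c = x \<or> c = y then -1 else 1) * (if e = x \<or> e = y then -1 else (1::real)) = -1"
  shows "C a b c e = 0"
proof -
  let ?e = "\<lambda>z. if z = x \<or> z = y then -1 else (1::real)"
  have pr: "prod ?e {4..d} = 1"
  proof -
    have "prod ?e {4..d} = prod (\<lambda>_. -1) ({4..d} \<inter> {z. z = x \<or> z = y}) * prod (\<lambda>_. 1) ({4..d} \<inter> - {z. z = x \<or> z = y})"
      by (rule prod.If_cases) simp
    also have "{4..d} \<inter> {z. z = x \<or> z = y} = {x, y}" using x y by auto
    finally show ?thesis using xy by simp
  qed
  have "C a b c e = ?e a * ?e b * ?e c * ?e e * C (id a) (id b) (id c) (id e)"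
    by (rule sp_inv[OF I permutes_id]) (use x y pr abce in auto)
  thus ?thesis using sg by simp
qed

lemma quarter:
  assumes x: "x \<in> {4..d}" and y: "y \<in> {4..d}" and xy: "x \<noteq> y"
    and abce: "a \<in> fidx d" "b \<in> fidx d" "c \<in> fidx d" "e \<in> fidx d"
  shows "C a b c e = (if a = y then -1 else 1) * (if b = y then -1 else 1) * (if c = y then -1 else 1) * (if e = y then -1 else 1)
     * C (transpose x y a) (transpose x y b) (transpose x y c) (transpose x y e)"
proof -
  let ?e = "\<lambda>z. if z = y then -1 else (1::real)"
  have pr: "prod ?e {4..d} = -1"
  proof -
    have "prod ?e {4..d} = ?e y * prod ?e ({4..d} - {y})" by (rule prod.remove) (use y in auto)
    also have "prod ?e ({4..d} - {y}) = 1" by (rule prod.neutral) auto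
    finally show ?thesis by simp
  qed
  show ?thesis
    by (rule sp_inv[OF I permutes_swap_id[OF x y]]) (use x y xy pr abce in \<open>auto simp: sign_swap_id\<close>)
qed

lemma free: assumes "x \<in> {3..d}" "z \<in> {3..d}" obtains y where "y \<in> {4..d}" "y \<noteq> x" "y \<noteq> z"
proof -
  have "(4::nat) \<in> {4..d}" "(5::nat) \<in> {4..d}" "(6::nat) \<in> {4..d}" using d5 by auto
  show ?thesis
  proof (cases "4 \<noteq> x \<and> 4 \<noteq> z")
    case True thus ?thesis using that \<open>(4::nat) \<in> {4..d}\<close> by metis
  next
    case F1: False show ?thesis
    proof (cases "5 \<noteq> x \<and> 5 \<noteq> z")
      case True thus ?thesis using that \<open>(5::nat) \<in> {4..d}\<close> by metis
    next
      case False hence "6 \<noteq> x \<and> 6 \<noteq> z" using F1 by auto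
      thus ?thesis using that \<open>(6::nat) \<in> {4..d}\<close> by metis
    qed
  qed
qed

end



context W6 begin

lemma Sins: "{3..d} = insert 3 {4..d}" using d5 by auto

lemma Hoff1: assumes t: "t = 0 \<or> t = 1" and x: "x \<in> {4..d}" shows "C t 3 t x = 0"
proof -
  obtain y where y: "y \<in> {4..d}" "y \<noteq> x" using free[of x x] x by auto
  show ?thesis by (rule flip[OF x y(1)]) (use t x y in \<open>auto simp: fidx_def\<close>)
qed

lemma Hoff2: assumes t: "t = 0 \<or> t = 1" and x: "x \<in> {4..d}" and z: "z \<in> {4..d}" "z \<noteq> x" shows "C t x t z = 0"
proof -
  obtain y where y: "y \<in> {4..d}" "y \<noteq> x" "y \<noteq> z" using free[of x z] x z by auto
  show ?thesis by (rule flip[OF x y(1)]) (use t x y z in \<open>auto simp: fidx_def\<close>)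
qed

lemma Hdiag: assumes t: "t = 0 \<or> t = 1" and x: "x \<in> {4..d}" shows "C t x t x = C t 4 t 4"
proof (cases "x = 4")
  case False
  have 4: "(4::nat) \<in> {4..d}" using d5 by auto
  show ?thesis using quarter[OF x 4 False, of t x t x] t x False by (auto simp: fidx_def)
qed simp

lemma trace: assumes t: "t = 0 \<or> t = 1" shows "(\<Sum>i\<in>{3..d}. C t i t i) = 0"
proof -
  have gs: "\<And>a Y. a \<in> fidx d \<Longrightarrow> (\<Sum>c\<in>fidx d. gfr a c * Y c) = Y (if a = 0 then 1 else if a = 1 then 0 else a)"
  proof -
    fix a :: nat and Y :: "nat \<Rightarrow> real" assume a: "a \<in> fidx d"
    let ?g = "if a = 0 then 1 else if a = 1 then 0 else a"
    have g: "?g \<in> fidx d" using a by (auto simp: fidx_def)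
    have "(\<Sum>c\<in>fidx d. gfr a c * Y c) = (\<Sum>c\<in>fidx d. if c = ?g then Y ?g else 0)"
      by (rule sum.cong) (use a in \<open>auto simp: gfr_def fidx_def\<close>)
    also have "\<dots> = Y ?g" using g by (simp add: fidx_def)
    finally show "(\<Sum>c\<in>fidx d. gfr a c * Y c) = Y ?g" .
  qed
  have "0 = (\<Sum>a\<in>fidx d. \<Sum>c\<in>fidx d. gfr a c * C a t c t)"
  proof -
    have "\<forall>b\<in>fidx d. \<forall>e\<in>fidx d. (\<Sum>a\<in>fidx d. \<Sum>c\<in>fidx d. gfr a c * C a b c e) = 0"
      using W unfolding is_weyl_def by blast
    moreover have "t \<in> fidx d" using t by (auto simp: fidx_def)
    ultimately show ?thesis by simp
  qed
  also have "\<dots> = (\<Sum>a\<in>fidx d. C a t (if a = 0 then 1 else if a = 1 then 0 else a) t)"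
    by (rule sum.cong) (auto simp: gs)
  also have "fidx d = insert 0 (insert 1 {3..d})" by (auto simp: fidx_def)
  also have "(\<Sum>a\<in>insert 0 (insert 1 {3..d}). C a t (if a = 0 then 1 else if a = 1 then 0 else a) t)
       = C 0 t 1 t + C 1 t 0 t + (\<Sum>a\<in>{3..d}. C a t a t)" by simp
  also have "C 0 t 1 t + C 1 t 0 t = 0" using t zero1 zero2 inF by auto
  also have "(\<Sum>a\<in>{3..d}. C a t a t) = (\<Sum>a\<in>{3..d}. C t a t a)"
  proof (rule sum.cong)
    fix a assume a: "a \<in> {3..d}"
    have F: "a \<in> fidx d" "t \<in> fidx d" using a t by (auto simp: fidx_def)
    have "C a t a t = - C t a a t" by (rule aS) (use F in auto)
    also have "C t a a t = - C t a t a" by (rule bS) (use F in auto)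
    finally show "C a t a t = C t a t a" by simp
  qed simp
  finally show ?thesis by simp
qed

lemma Hfull: assumes t: "t = 0 \<or> t = 1" and i: "i \<in> {3..d}" and j: "j \<in> {3..d}"
  shows "C t i t j = (- C t 4 t 4) * kappa d i j"
proof -
  have B4: "(4::nat) \<in> {4..d}" using d5 by auto
  consider "i = 3" "j = 3" | "i = 3" "j \<in> {4..d}" | "i \<in> {4..d}" "j = 3" | "i \<in> {4..d}" "j \<in> {4..d}" "i = j"
     | "i \<in> {4..d}" "j \<in> {4..d}" "i \<noteq> j"
  proof -
    have "i = 3 \<or> i \<in> {4..d}" "j = 3 \<or> j \<in> {4..d}" using i j by auto
    thus "thesis" using that by blast
  qed
  thus ?thesis
  proof cases
    case 1
    have "0 = (\<Sum>i\<in>{3..d}. C t i t i)" using trace[OF t] by simp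
    also have "\<dots> = C t 3 t 3 + (\<Sum>i\<in>{4..d}. C t i t i)" by (simp add: Sins)
    also have "(\<Sum>i\<in>{4..d}. C t i t i) = (\<Sum>i\<in>{4..d}. C t 4 t 4)" by (rule sum.cong[OF refl], rule Hdiag[OF t], simp)
    also have "\<dots> = (real d - 3) * C t 4 t 4" using d5 by (simp add: of_nat_diff)
    finally show ?thesis using 1 by (simp add: kappa_def algebra_simps)
  next
    case 2 thus ?thesis using Hoff1[OF t] by (simp add: kappa_def)
  next
    case 3 thus ?thesis using Hoff1[OF t, of i] pS[of t i t 3] t inF by (auto simp: kappa_def)
  next
    case 4 thus ?thesis using Hdiag[OF t, of i] by (auto simp: kappa_def)
  next
    case 5 thus ?thesis using Hoff2[OF t, of i j] by (auto simp: kappa_def)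
  qed
qed

lemma vzero: assumes t: "t = 0 \<or> t = 1" and k: "k \<in> {4..d}" and i: "i \<in> {3..d}" shows "C t i i k = 0"
proof -
  obtain y where y: "y \<in> {4..d}" "y \<noteq> i" "y \<noteq> k" using free[of i k] i k by auto
  show ?thesis by (rule flip[OF k y(1)]) (use t i k y in \<open>auto simp: fidx_def\<close>)
qed

lemma vthree: assumes t: "t = 0 \<or> t = 1" and x: "x \<in> {4..d}" shows "C t x x 3 = C t 4 4 3"
proof (cases "x = 4")
  case False
  have 4: "(4::nat) \<in> {4..d}" using d5 by auto
  show ?thesis using quarter[OF x 4 False, of t x x 3] t x False by (auto simp: fidx_def)
qed simp

lemma vgen: assumes t: "t = 0 \<or> t = 1" and k: "k \<in> {3..d}"
  shows "(1 / (Nd d - 1)) * (\<Sum>i\<in>{3..d}. C t i i k) = kdelta k 3 * C t 4 4 3"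
proof (cases "k = 3")
  case True
  have "(\<Sum>i\<in>{3..d}. C t i i k) = C t 3 3 3 + (\<Sum>i\<in>{4..d}. C t i i 3)" using True by (simp add: Sins)
  also have "(\<Sum>i\<in>{4..d}. C t i i 3) = (\<Sum>i\<in>{4..d}. C t 4 4 3)" by (rule sum.cong[OF refl], rule vthree[OF t], simp)
  also have "\<dots> = (real d - 3) * C t 4 4 3" using d5 by (simp add: of_nat_diff)
  also have "C t 3 3 3 = 0" by (rule zero2) (use t d5 in \<open>auto simp: fidx_def\<close>)
  finally show ?thesis using True d5 by (simp add: kdelta_def Nd_def)
next
  case False
  hence "k \<in> {4..d}" using k by auto
  hence "(\<Sum>i\<in>{3..d}. C t i i k) = 0" using vzero[OF t] by simp
  thus ?thesis using False by (simp add: kdelta_def)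
qed

lemma Tdist: assumes t: "t = 0 \<or> t = 1" and ijk: "i \<in> {4..d}" "j \<in> {4..d}" "k \<in> {4..d}" "i \<noteq> j" "j \<noteq> k" "i \<noteq> k"
  shows "C t i j k = 0"
proof -
  have F: "t \<in> fidx d" "i \<in> fidx d" "j \<in> fidx d" "k \<in> fidx d" using t ijk by (auto simp: fidx_def)
  have q1: "C t i j k = - C t j i k" using quarter[OF ijk(1,2,4), of t i j k] t ijk by (auto simp: F)
  have q2: "C t k i j = - C t i k j" using quarter[of k i t k i j] t ijk by (auto simp: F)
  have "C t i j k + C t j k i + C t k i j = 0" using bian F by blast
  moreover have "C t j k i = - C t j i k" using bS F by blast
  moreover have "C t i k j = - C t i j k" using bS F by metis
  ultimately show ?thesis using q1 q2 by simp
qed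

lemma Tfull: assumes t: "t = 0 \<or> t = 1" and ijk: "i \<in> {3..d}" "j \<in> {3..d}" "k \<in> {3..d}"
  shows "C t i j k = kdelta i j * (kdelta k 3 * C t 4 4 3) - kdelta i k * (kdelta j 3 * C t 4 4 3)"
proof -
  have F: "t \<in> fidx d" "i \<in> fidx d" "j \<in> fidx d" "k \<in> fidx d" using t ijk by (auto simp: fidx_def)
  consider "j = k" | "j \<noteq> k" "i = j" | "j \<noteq> k" "i = k" | "i \<noteq> j" "j \<noteq> k" "i \<noteq> k" by blast
  thus ?thesis
  proof cases
    case 1 thus ?thesis using zero2 F by (simp add: kdelta_def)
  next
    case 2
    show ?thesis
    proof (cases "k = 3")
      case True thus ?thesis using 2 vthree[OF t, of i] ijk by (auto simp: kdelta_def)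
    next
      case False thus ?thesis using 2 vzero[OF t, of k i] ijk by (auto simp: kdelta_def)
    qed
  next
    case 3
    have e: "C t i j k = - C t i k j" using bS F by blast
    show ?thesis
    proof (cases "j = 3")
      case True thus ?thesis using 3 e vthree[OF t, of i] ijk by (auto simp: kdelta_def)
    next
      case False thus ?thesis using 3 e vzero[OF t, of j i] ijk by (auto simp: kdelta_def)
    qed
  next
    case 4
    have "C t i j k = 0"
    proof (cases "i = 3 \<or> j = 3 \<or> k = 3")
      case False thus ?thesis using Tdist[OF t, of i j k] 4 ijk by auto
    next
      case True
      then consider "i = 3" | "j = 3" | "k = 3" by blast
      thus ?thesis
      proof cases
        case 1
        hence jk: "j \<in> {4..d}" "k \<in> {4..d}" using 4 ijk by auto
        obtain y where y: "y \<in> {4..d}" "y \<noteq> j" "y \<noteq> k" using free[of j k] jk by auto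
        show ?thesis by (rule flip[OF jk(1) y(1)]) (use t 1 jk y F 4 in \<open>auto\<close>)
      next
        case 2
        hence jk: "i \<in> {4..d}" "k \<in> {4..d}" using 4 ijk by auto
        obtain y where y: "y \<in> {4..d}" "y \<noteq> i" "y \<noteq> k" using free[of i k] jk by auto
        show ?thesis by (rule flip[OF jk(1) y(1)]) (use t 2 jk y F 4 in \<open>auto\<close>)
      next
        case 3
        hence jk: "i \<in> {4..d}" "j \<in> {4..d}" using 4 ijk by auto
        obtain y where y: "y \<in> {4..d}" "y \<noteq> i" "y \<noteq> j" using free[of i j] jk by auto
        show ?thesis by (rule flip[OF jk(1) y(1)]) (use t 3 jk y F 4 in \<open>auto\<close>)
      qed
    qed
    thus ?thesis using 4 by (simp add: kdelta_def)
  qed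
qed

lemma Azero: assumes ij: "i \<in> {3..d}" "j \<in> {3..d}" shows "C 0 1 i j = 0"
proof -
  have F: "i \<in> fidx d" "j \<in> fidx d" using ij by (auto simp: fidx_def)
  consider "i = j" | "i \<noteq> j" "i \<in> {4..d}" | "i \<noteq> j" "j \<in> {4..d}" using ij by force
  thus ?thesis
  proof cases
    case 1 thus ?thesis using zero2 F inF by auto
  next
    case 2
    obtain y where y: "y \<in> {4..d}" "y \<noteq> i" "y \<noteq> j" using free[of i j] ij by auto
    show ?thesis by (rule flip[OF 2(2) y(1)]) (use 2 y F inF in \<open>auto\<close>)
  next
    case 3
    obtain y where y: "y \<in> {4..d}" "y \<noteq> i" "y \<noteq> j" using free[of i j] ij by auto
    show ?thesis by (rule flip[OF 3(2) y(1)]) (use 3 y F inF in \<open>auto\<close>)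
  qed
qed

end



definition Pm :: "nat \<Rightarrow> nat \<Rightarrow> real" where "Pm a b = kdelta a b - kdelta a 3 * kdelta b 3"
definition um :: "nat \<Rightarrow> real" where "um a = kdelta a 3"
definition Fm :: "real \<Rightarrow> real \<Rightarrow> nat \<Rightarrow> nat \<Rightarrow> nat \<Rightarrow> nat \<Rightarrow> real" where
  "Fm al be i j k l = be*(Pm i k * Pm j l - Pm i l * Pm j k)
     + al*(um i*um k*Pm j l + um j*um l*Pm i k - um i*um l*Pm j k - um j*um k*Pm i l)"

context W6 begin

lemma sw: assumes x: "x \<in> {4..d}" and y: "y \<in> {4..d}" and ab: "a \<in> fidx d" "b \<in> fidx d"
  shows "C a b a b = C (transpose x y a) (transpose x y b) (transpose x y a) (transpose x y b)"
proof (cases "x = y")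
  case False
  show ?thesis using quarter[OF x y False ab(1) ab(2) ab(1) ab(2)] by auto
qed simp

lemma C3x: assumes x: "x \<in> {4..d}" shows "C 3 x 3 x = C 3 4 3 4"
proof -
  have 4: "(4::nat) \<in> {4..d}" using d5 by auto
  show ?thesis using sw[OF x 4, of 3 x] x d5 by (auto simp: fidx_def)
qed

lemma Cxy1: assumes x: "x \<in> {4..d}" and y: "y \<in> {4..d}" "x \<noteq> y" "y \<noteq> 4" shows "C x y x y = C 4 5 4 5"
proof -
  have 4: "(4::nat) \<in> {4..d}" and 5: "(5::nat) \<in> {4..d}" using d5 by auto
  have "C x y x y = C 4 y 4 y" using sw[OF x 4, of x y] x y by (auto simp: fidx_def)
  also have "\<dots> = C 4 5 4 5" using sw[OF y(1) 5, of 4 y] y 4 by (auto simp: fidx_def)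
  finally show ?thesis .
qed

lemma Cxy: assumes x: "x \<in> {4..d}" and y: "y \<in> {4..d}" "x \<noteq> y" shows "C x y x y = C 4 5 4 5"
proof (cases "y = 4")
  case True
  have F: "x \<in> fidx d" "y \<in> fidx d" using x y by (auto simp: fidx_def)
  have "C x y x y = - C y x x y" by (rule aS) (use F in auto)
  also have "C y x x y = - C y x y x" by (rule bS) (use F in auto)
  finally have "C x y x y = C y x y x" by simp
  also have "\<dots> = C 4 5 4 5" using Cxy1[of y x] x y True by auto
  finally show ?thesis .
qed (use Cxy1[of x y] x y in auto)

lemma L3b: assumes pqr: "p \<in> {3..d}" "q \<in> {3..d}" "r \<in> {3..d}" "p \<noteq> q" "p \<noteq> r" "q \<noteq> r"
  shows "C p q p r = 0"
proof -
  have F: "p \<in> fidx d" "q \<in> fidx d" "r \<in> fidx d" using pqr by (auto simp: fidx_def)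
  have "q = 3 \<or> q \<in> {4..d}" "r = 3 \<or> r \<in> {4..d}" using pqr by auto
  then consider "q \<in> {4..d}" "r \<in> {4..d}" | "q = 3" | "r = 3" by blast
  thus ?thesis
  proof cases
    case 1
    have "C p q p r = - C p r p q" using quarter[OF 1(1) 1(2) pqr(6) F(1) F(2) F(1) F(3)] pqr by auto
    also have "C p r p q = C p q p r" by (rule pS) (use F in auto)
    finally show ?thesis by simp
  next
    case 2
    hence pr: "p \<in> {4..d}" "r \<in> {4..d}" using pqr by auto
    obtain y where y: "y \<in> {4..d}" "y \<noteq> p" "y \<noteq> r" using free[of p r] pqr by auto
    show ?thesis by (rule flip[OF pr(2) y(1)]) (use 2 pr y F pqr in \<open>auto\<close>)
  next
    case 3
    hence pr: "p \<in> {4..d}" "q \<in> {4..d}" using pqr by auto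
    obtain y where y: "y \<in> {4..d}" "y \<noteq> p" "y \<noteq> q" using free[of p q] pqr by auto
    show ?thesis by (rule flip[OF pr(2) y(1)]) (use 3 pr y F pqr in \<open>auto\<close>)
  qed
qed

lemma Cdist: assumes a: "a \<in> fidx d" "a \<noteq> i" "a \<noteq> j" "a \<noteq> k"
  and ijk: "i \<in> {4..d}" "j \<in> {4..d}" "k \<in> {4..d}" "i \<noteq> j" "j \<noteq> k" "i \<noteq> k"
  shows "C a i j k = 0"
proof -
  have F: "a \<in> fidx d" "i \<in> fidx d" "j \<in> fidx d" "k \<in> fidx d" using a ijk by (auto simp: fidx_def)
  have q1: "C a i j k = - C a j i k" using quarter[OF ijk(1,2,4) F(1) F(2) F(3) F(4)] a ijk by auto
  have q2: "C a k i j = - C a i k j" using quarter[OF ijk(3,1), of a k i j] a ijk F by auto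
  have "C a i j k + C a j k i + C a k i j = 0" using bian F by blast
  moreover have "C a j k i = - C a j i k" using bS F by blast
  moreover have "C a i k j = - C a i j k" using bS F by metis
  ultimately show ?thesis using q1 q2 by simp
qed

lemma L3c: assumes ijkl: "i \<in> {3..d}" "j \<in> {3..d}" "k \<in> {3..d}" "l \<in> {3..d}"
  and dist: "i \<noteq> j" "i \<noteq> k" "i \<noteq> l" "j \<noteq> k" "j \<noteq> l" "k \<noteq> l"
  shows "C i j k l = 0"
proof -
  have F: "i \<in> fidx d" "j \<in> fidx d" "k \<in> fidx d" "l \<in> fidx d" using ijkl by (auto simp: fidx_def)
  consider "j \<noteq> 3" "k \<noteq> 3" "l \<noteq> 3" | "j = 3" | "k = 3" | "l = 3" by blast
  thus ?thesis
  proof cases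
    case 1 thus ?thesis using Cdist[of i j k l] F ijkl dist by auto
  next
    case 2
    have "C i j k l = - C j i k l" by (rule aS) (use F in auto)
    also have "C j i k l = 0" using Cdist[of j i k l] F ijkl dist 2 by auto
    finally show ?thesis by simp
  next
    case 3
    have "C i j k l = C k l i j" by (rule pS) (use F in auto)
    also have "C k l i j = 0" using Cdist[of k l i j] F ijkl dist 3 by auto
    finally show ?thesis by simp
  next
    case 4
    have "C i j k l = C k l i j" by (rule pS) (use F in auto)
    also have "C k l i j = - C l k i j" by (rule aS) (use F in auto)
    also have "C l k i j = 0" using Cdist[of l k i j] F ijkl dist 4 by auto
    finally show ?thesis by simp
  qed
qed

end


lemma alg:
  fixes n al be dik djl dil djk ui uj uk ul :: real
  assumes n: "n \<noteq> 0" "n - 1 \<noteq> 0"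
  defines "Pik \<equiv> dik - ui*uk" and "Pjl \<equiv> djl - uj*ul" and "Pil \<equiv> dil - ui*ul" and "Pjk \<equiv> djk - uj*uk"
  shows "be*(Pik * Pjl - Pil * Pjk) + al*(ui*uk*Pjl + uj*ul*Pik - ui*ul*Pjk - uj*uk*Pil)
     - (1 / ((n + 1) - 2)) * (dik * (((n-1)*be + al)*Pjl + n*al*uj*ul) - dil * (((n-1)*be + al)*Pjk + n*al*uj*uk)
                          - djk * (((n-1)*be + al)*Pil + n*al*ui*ul) + djl * (((n-1)*be + al)*Pik + n*al*ui*uk))
     + (n*al + n*((n-1)*be + al)) / (((n+1) - 1) * ((n+1) - 2)) * (dik * djl - dil * djk) = 0"
  using n unfolding Pik_def Pjl_def Pil_def Pjk_def
  by (simp add: field_simps)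



context W6 begin

lemma Cval: assumes ijkl: "i \<in> {3..d}" "j \<in> {3..d}" "k \<in> {3..d}" "l \<in> {3..d}"
  shows "C i j k l = Fm (C 3 4 3 4) (C 4 5 4 5) i j k l"
proof -
  have F: "i \<in> fidx d" "j \<in> fidx d" "k \<in> fidx d" "l \<in> fidx d" using ijkl by (auto simp: fidx_def)
  have d3: "\<And>x. x \<in> {3..d} \<Longrightarrow> x \<noteq> 3 \<Longrightarrow> x \<in> {4..d}" by auto
  note defs = Fm_def Pm_def um_def kdelta_def
  have ijij: "C i j i j = Fm (C 3 4 3 4) (C 4 5 4 5) i j i j" if ne: "i \<noteq> j"
  proof -
    consider "i = 3" | "j = 3" | "i \<noteq> 3" "j \<noteq> 3" by blast
    thus ?thesis
    proof cases
      case 1 thus ?thesis using C3x[of j] d3[OF ijkl(2)] ne by (simp add: defs)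
    next
      case 2
      have "C i j i j = - C j i i j" by (rule aS) (use F in auto)
      also have "C j i i j = - C j i j i" by (rule bS) (use F in auto)
      finally have "C i j i j = C j i j i" by simp
      thus ?thesis using 2 C3x[of i] d3[OF ijkl(1)] ne by (simp add: defs)
    next
      case 3 thus ?thesis using Cxy[of i j] d3[OF ijkl(1)] d3[OF ijkl(2)] ne by (simp add: defs)
    qed
  qed
  consider "i = j" | "k = l" | "i \<noteq> j" "k \<noteq> l" "k = i" "l = j" | "i \<noteq> j" "k \<noteq> l" "k = j" "l = i"
    | "i \<noteq> j" "k \<noteq> l" "i = k" "l \<noteq> j" | "i \<noteq> j" "k \<noteq> l" "i = l" "k \<noteq> j"
    | "i \<noteq> j" "k \<noteq> l" "j = k" "i \<noteq> l" | "i \<noteq> j" "k \<noteq> l" "j = l" "i \<noteq> k"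
    | "i \<noteq> j" "i \<noteq> k" "i \<noteq> l" "j \<noteq> k" "j \<noteq> l" "k \<noteq> l" by blast
  thus ?thesis
  proof cases
    case 1 thus ?thesis using zero1 F by (simp add: defs)
  next
    case 2 thus ?thesis using zero2 F by (simp add: defs)
  next
    case 3 thus ?thesis using ijij by simp
  next
    case 4
    have "C i j k l = - C i j l k" by (rule bS) (use F in auto)
    moreover have "Fm (C 3 4 3 4) (C 4 5 4 5) i j j i = - Fm (C 3 4 3 4) (C 4 5 4 5) i j i j"
      by (simp add: Fm_def algebra_simps)
    ultimately show ?thesis using ijij 4 by simp
  next
    case 5
    have "C i j k l = 0" using L3b[of i j l] ijkl 5 by auto
    thus ?thesis using 5 by (auto simp: defs)
  next
    case 6
    have "C i j k l = - C i j l k" by (rule bS) (use F in auto)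
    also have "C i j l k = 0" using L3b[of i j k] ijkl 6 by auto
    finally show ?thesis using 6 by (auto simp: defs)
  next
    case 7
    have "C i j k l = - C j i k l" by (rule aS) (use F in auto)
    also have "C j i k l = 0" using L3b[of j i l] ijkl 7 by auto
    finally show ?thesis using 7 by (auto simp: defs)
  next
    case 8
    have "C i j k l = - C j i k l" by (rule aS) (use F in auto)
    also have "C j i k l = - C j i l k" by (rule bS) (use F in auto)
    also have "C j i l k = 0" using L3b[of j i k] ijkl 8 by auto
    finally show ?thesis using 8 by (auto simp: defs)
  next
    case 9
    have "C i j k l = 0" using L3c ijkl 9 by blast
    thus ?thesis using 9 by (auto simp: defs)
  qed
qed


lemma Rb: assumes jl: "j \<in> {3..d}" "l \<in> {3..d}"
  shows "Rbar d C j l = ((real d - 4) * C 4 5 4 5 + C 3 4 3 4) * Pm j l + (real d - 3) * C 3 4 3 4 * um j * um l"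
proof -
  let ?al = "C 3 4 3 4" and ?be = "C 4 5 4 5"
  note defs = Fm_def Pm_def um_def kdelta_def
  have "Rbar d C j l = (\<Sum>k\<in>{3..d}. Fm ?al ?be k j k l)" unfolding Rbar_def sidx_def
    by (rule sum.cong[OF refl], rule Cval) (use jl in auto)
  also have "\<dots> = Fm ?al ?be 3 j 3 l + (\<Sum>k\<in>{4..d}. Fm ?al ?be k j k l)" by (simp add: Sins)
  also have "Fm ?al ?be 3 j 3 l = ?al * Pm j l" by (simp add: defs)
  also have "(\<Sum>k\<in>{4..d}. Fm ?al ?be k j k l) = (\<Sum>k\<in>{4..d}. (?be * Pm j l + ?al * um j * um l) - ?be * (if k = j then kdelta j l else 0))"
    by (rule sum.cong[OF refl]) (auto simp: defs)
  also have "\<dots> = (real d - 3) * (?be * Pm j l + ?al * um j * um l) - ?be * (if j \<in> {4..d} then kdelta j l else 0)"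
    using d5 by (simp add: sum_subtractf sum_distrib_left[symmetric] of_nat_diff)
  also have "(if j \<in> {4..d} then kdelta j l else 0) = Pm j l" using jl by (auto simp: Pm_def kdelta_def)
  finally show ?thesis by (simp add: algebra_simps)
qed

lemma Rsc: "Rbar_sc d C = (real d - 3) * C 3 4 3 4 + (real d - 3) * ((real d - 4) * C 4 5 4 5 + C 3 4 3 4)"
proof -
  have "Rbar_sc d C = Rbar d C 3 3 + (\<Sum>i\<in>{4..d}. Rbar d C i i)" unfolding Rbar_sc_def sidx_def by (simp add: Sins)
  also have "Rbar d C 3 3 = (real d - 3) * C 3 4 3 4" using Rb[of 3 3] d5 by (simp add: Pm_def um_def kdelta_def)
  also have "(\<Sum>i\<in>{4..d}. Rbar d C i i) = (\<Sum>i\<in>{4..d}. (real d - 4) * C 4 5 4 5 + C 3 4 3 4)"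
    by (rule sum.cong[OF refl]) (auto simp: Rb Pm_def um_def kdelta_def)
  also have "\<dots> = (real d - 3) * ((real d - 4) * C 4 5 4 5 + C 3 4 3 4)" using d5 by (simp add: of_nat_diff)
  finally show ?thesis .
qed

lemma Cbar0: assumes ijkl: "i \<in> {3..d}" "j \<in> {3..d}" "k \<in> {3..d}" "l \<in> {3..d}"
  shows "Cbar d C i j k l = 0"
proof -
  have n: "real d - 3 \<noteq> 0" "real d - 3 - 1 \<noteq> 0" using d5 by auto
  have Nd: "Nd d = (real d - 3) + 1" by (simp add: Nd_def)
  have e: "real d - 4 = (real d - 3) - 1" by simp
  show ?thesis unfolding Cbar_def Cval[OF ijkl] Rb[OF ijkl(2,4)] Rb[OF ijkl(2,3)] Rb[OF ijkl(1,4)] Rb[OF ijkl(1,3)] Rsc Nd e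
    Fm_def Pm_def
    using alg[where n="real d - 3" and al="C 3 4 3 4" and be="C 4 5 4 5" and dik="kdelta i k" and djl="kdelta j l"
      and dil="kdelta i l" and djk="kdelta j k" and ui="um i" and uj="um j" and uk="um k" and ul="um l", OF n]
    by (simp add: um_def)
qed

lemma Sb: assumes ij: "i \<in> {3..d}" "j \<in> {3..d}"
  shows "Sbar d C i j = (Rbar_sc d C / Nd d - ((real d - 4) * C 4 5 4 5 + C 3 4 3 4)) * kappa d i j"
proof -
  have Nd: "Nd d = real d - 2" by (simp add: Nd_def)
  have nz: "real d - 2 \<noteq> 0" using d5 by auto
  show ?thesis unfolding Sbar_def Rb[OF ij] Rsc Nd using ij nz
    by (auto simp: Pm_def um_def kdelta_def kappa_def field_simps)
qed

end

theorem mainTheorem3: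
  fixes d :: nat and C :: tensor4
  assumes "d > 5"
    and "is_weyl d C"
    and "so_invariant d C"
  shows "\<exists>lc lh vc vh s R.
    (\<forall>i\<in>sidx d. \<forall>j\<in>sidx d. Hcheck C i j = lc * kappa d i j) \<and>
    (\<forall>i\<in>sidx d. \<forall>j\<in>sidx d. \<forall>k\<in>sidx d. Tcheck d C i j k = 0) \<and>
    (\<forall>i\<in>sidx d. vcheck d C i = kdelta i 3 * vc) \<and>
    (\<forall>i\<in>sidx d. \<forall>j\<in>sidx d. Amat C i j = 0) \<and>
    (\<forall>i\<in>sidx d. \<forall>j\<in>sidx d. Sbar d C i j = s * kappa d i j) \<and>
    Rbar_sc d C = R \<and>
    (\<forall>i\<in>sidx d. \<forall>j\<in>sidx d. \<forall>k\<in>sidx d. \<forall>l\<in>sidx d. Cbar d C i j k l = 0) \<and>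
    (\<forall>i\<in>sidx d. \<forall>j\<in>sidx d. Hhat C i j = lh * kappa d i j) \<and>
    (\<forall>i\<in>sidx d. \<forall>j\<in>sidx d. \<forall>k\<in>sidx d. That d C i j k = 0) \<and>
    (\<forall>i\<in>sidx d. vhat d C i = kdelta i 3 * vh)"
proof -
  interpret W6 d C using assms by unfold_locales
  have t1: "(1::nat) = 0 \<or> (1::nat) = 1" and t0: "(0::nat) = 0 \<or> (0::nat) = 1" by simp_all
  have vc: "\<And>k. k \<in> sidx d \<Longrightarrow> vcheck d C k = kdelta k 3 * C 1 4 4 3"
    unfolding vcheck_def sidx_def by (rule vgen[OF t1])
  have vh: "\<And>k. k \<in> sidx d \<Longrightarrow> vhat d C k = kdelta k 3 * C 0 4 4 3"
    unfolding vhat_def sidx_def by (rule vgen[OF t0])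
  show ?thesis
  proof (intro exI conjI ballI)
    show "\<And>i j. i \<in> sidx d \<Longrightarrow> j \<in> sidx d \<Longrightarrow> Hcheck C i j = (- C 1 4 1 4) * kappa d i j"
      unfolding Hcheck_def sidx_def by (rule Hfull[OF t1])
    show "\<And>i j. i \<in> sidx d \<Longrightarrow> j \<in> sidx d \<Longrightarrow> Hhat C i j = (- C 0 4 0 4) * kappa d i j"
      unfolding Hhat_def sidx_def by (rule Hfull[OF t0])
    show "\<And>i. i \<in> sidx d \<Longrightarrow> vcheck d C i = kdelta i 3 * C 1 4 4 3" by (rule vc)
    show "\<And>i. i \<in> sidx d \<Longrightarrow> vhat d C i = kdelta i 3 * C 0 4 4 3" by (rule vh)
    show "\<And>i j k. i \<in> sidx d \<Longrightarrow> j \<in> sidx d \<Longrightarrow> k \<in> sidx d \<Longrightarrow> Tcheck d C i j k = 0"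
      unfolding Tcheck_def using vc Tfull[OF t1] by (simp add: sidx_def)
    show "\<And>i j k. i \<in> sidx d \<Longrightarrow> j \<in> sidx d \<Longrightarrow> k \<in> sidx d \<Longrightarrow> That d C i j k = 0"
      unfolding That_def using vh Tfull[OF t0] by (simp add: sidx_def)
    show "\<And>i j. i \<in> sidx d \<Longrightarrow> j \<in> sidx d \<Longrightarrow> Amat C i j = 0"
      unfolding Amat_def sidx_def by (rule Azero)
    show "\<And>i j. i \<in> sidx d \<Longrightarrow> j \<in> sidx d \<Longrightarrow> Sbar d C i j = (Rbar_sc d C / Nd d - ((real d - 4) * C 4 5 4 5 + C 3 4 3 4)) * kappa d i j"
      unfolding sidx_def by (rule Sb)
    show "Rbar_sc d C = Rbar_sc d C" ..
    show "\<And>i j k l. i \<in> sidx d \<Longrightarrow> j \<in> sidx d \<Longrightarrow> k \<in> sidx d \<Longrightarrow> l \<in> sidx d \<Longrightarrow> Cbar d C i j k l = 0"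
      unfolding sidx_def by (rule Cbar0)
  qed
qed


end
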